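(* Let $\lambda_1,\lambda_2\in\Delta$, $(s,p)=(\lambda_1+\lambda_2,\lambda_1\lambda_2)\in\Gamma$, and let $\beta\in\mathbb{C}$ with $|\beta|\le1$ be such that $s=\beta+\bar\beta p$, where, in the case $|p|=1$, $\beta=\tfrac12 s$. Let $a\in\mathbb{C}$. The following statements are equivalent: (1) $(a,s,p)\in\overline{\mathcal{P}}$; (2) $(a,s,p)\in\overline{\mathcal{P}_\mu}$; (3) $|a|\le\left|1-\dfrac{\tfrac12 s\bar\beta}{1+\sqrt{1-|\beta|^2}}\right|$; (4) $|a|\le\tfrac12|1-\bar\lambda_2\lambda_1|+\tfrac12(1-|\lambda_1|^2)^{1/2}(1-|\lambda_2|^2)^{1/2}$; (5) $|\Psi_z(a,s,p)|\le1$ for all $z\in\mathbb{D}$; (6) there exists $A\in\mathbb{C}^{2\times2}$ with $\|A\|\le1$ and $\pi(A)=(a,s,p)$; (7) there exists $A\in\mathbb{C}^{2\times2}$ with $\mu_E(A)\le1$ and $\pi(A)=(a,s,p)$.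
   Context: $\mathbb{D}$ is the open and $\Delta$ the closed unit disc; $\Gamma=\{(z+w,zw):|z|\le1,|w|\le1\}$ (closure of the symmetrised bidisc $\mathbb{G}$); for $(s,p)\in\Gamma$ and $z\in\mathbb{D}$ one has $1-sz+pz^2\neq0$. $\mathbb{B}$ is the open unit ball of $\mathbb{C}^{2\times2}$ (operator norm); $\pi(A)=(a_{21},\operatorname{tr}A,\det A)$; $\mathcal{P}=\pi(\mathbb{B})$ and $\overline{\mathcal{P}}$ is its closure in $\mathbb{C}^3$. $E=\{\begin{pmatrix}z&w\\0&z\end{pmatrix}:z,w\in\mathbb{C}\}$, $1/\mu_E(A)=\inf\{\|X\|:X\in E,\det(I-AX)=0\}$; $\mathcal{P}_\mu=\{\pi(A):\mu_E(A)<1\}$, with closure $\overline{\mathcal{P}_\mu}$. $\Psi_z(a,s,p)=a(1-|z|^2)/(1-sz+pz^2)$. *)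

theory Defs
  imports "HOL-Analysis.Analysis"
begin

type_synonym cmat2 = "complex^2^2"

definition opnorm :: "cmat2 \<Rightarrow> real" where
  "opnorm A = onorm (\<lambda>x. A *v x)"

text \<open>pi(A) = (a21, tr A, det A); index 1 is the first row/column, 2 the second.\<close>
definition piA :: "cmat2 \<Rightarrow> complex \<times> complex \<times> complex" where
  "piA A = (A $ 2 $ 1, trace A, det A)"

definition Espace :: "cmat2 set" where
  "Espace = {X. X $ 1 $ 1 = X $ 2 $ 2 \<and> X $ 2 $ 1 = 0}"

text \<open>mu_E(A): 1/mu_E(A) = inf {||X|| : X in E, det(I - AX) = 0}; inf of empty set = +oo, so mu_E = 0.\<close>
definition muE :: "cmat2 \<Rightarrow> real" where
  "muE A = (let S = {opnorm X | X. X \<in> Espace \<and> det (mat 1 - A ** X) = 0}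
            in if S = {} then 0 else inverse (Inf S))"

definition Pent :: "(complex \<times> complex \<times> complex) set" where
  "Pent = piA ` {A. opnorm A < 1}"

definition Pmu :: "(complex \<times> complex \<times> complex) set" where
  "Pmu = piA ` {A. muE A < 1}"

definition Psi :: "complex \<Rightarrow> complex \<Rightarrow> complex \<Rightarrow> complex \<Rightarrow> complex" where
  "Psi z a s p = a * (1 - (cmod z)^2) / (1 - s * z + p * z^2)"

end

theory Submission
  imports Defs
begin
lemma norm2_vec: "(norm (v::complex^2))^2 = (cmod (v $ 1))^2 + (cmod (v $ 2))^2"
  unfolding norm_vec_def L2_set_def by (simp add: sum_2)
lemma mv1: "(A *v v)$1 = A$1$1 * v$1 + A$1$2 * v$2" for A :: cmat2
  by (simp add: matrix_vector_mult_def sum_2)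
lemma mv2: "(A *v v)$2 = A$2$1 * v$1 + A$2$2 * v$2" for A :: cmat2
  by (simp add: matrix_vector_mult_def sum_2)
lemma bl: "bounded_linear (\<lambda>x. (A::cmat2) *v x)"
  by (rule matrix_vector_mul_bounded_linear)
lemma opnorm_bound: "norm (A *v x) \<le> opnorm A * norm x" for A :: cmat2
  unfolding opnorm_def by (rule onorm[OF bl])
lemma opnorm_nonneg: "0 \<le> opnorm A" for A :: cmat2
  unfolding opnorm_def by (rule onorm_pos_le[OF bl])
lemma opnorm_le_sq:
  fixes A :: cmat2
  assumes c: "c \<ge> 0"
    and H: "\<And>x1 x2. cmod (A$1$1 * x1 + A$1$2 * x2)^2 + cmod (A$2$1 * x1 + A$2$2 * x2)^2
               \<le> c^2 * (cmod x1^2 + cmod x2^2)"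
  shows "opnorm A \<le> c"
  unfolding opnorm_def
proof (rule onorm_le)
  fix x :: "complex^2"
  have "norm (A *v x)^2 = cmod (A$1$1 * x$1 + A$1$2 * x$2)^2 + cmod (A$2$1 * x$1 + A$2$2 * x$2)^2"
    by (simp only: norm2_vec mv1 mv2)
  also have "\<dots> \<le> c^2 * (cmod (x$1)^2 + cmod (x$2)^2)" by (rule H)
  also have "\<dots> = (c * norm x)^2" by (simp only: norm2_vec power_mult_distrib)
  finally have "norm (A *v x)^2 \<le> (c * norm x)^2" .
  thus "norm (A *v x) \<le> c * norm x"
    by (rule power2_le_imp_le[OF _ mult_nonneg_nonneg[OF c norm_ge_zero]])
qed

lemma X_norm:
  fixes X :: cmat2 and z w :: complex
  assumes X: "X$1$1 = z" "X$1$2 = w" "X$2$1 = 0" "X$2$2 = z"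
    and z: "cmod z < 1" and w: "cmod w < 1 - cmod z^2"
  shows "opnorm X < 1"
proof -
  define \<zeta> where "\<zeta> = cmod z"
  define \<omega> where "\<omega> = cmod w"
  define t where "t = (\<omega> + sqrt (\<omega>^2 + 4 * \<zeta>^2)) / 2"
  have z0: "\<zeta> \<ge> 0" "\<omega> \<ge> 0" by (auto simp: \<zeta>_def \<omega>_def)
  have w1: "\<omega> < 1 - \<zeta>^2" using w by (simp add: \<zeta>_def \<omega>_def)
  have t0: "t \<ge> 0" using z0 by (simp add: t_def)
  have sq: "sqrt (\<omega>^2 + 4 * \<zeta>^2) < 2 - \<omega>"
  proof (rule real_less_lsqrt)
    have "\<zeta>^2 \<ge> 0" by simp
    thus "0 \<le> 2 - \<omega>" using w1 by linarith
    show "\<omega>^2 + 4 * \<zeta>^2 < (2 - \<omega>)^2" using w1 by (simp add: power2_diff algebra_simps)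
  qed
  have t1: "t < 1" using sq by (simp add: t_def)
  have tt: "t^2 = \<omega> * t + \<zeta>^2"
  proof -
    have "(sqrt (\<omega>^2 + 4 * \<zeta>^2))^2 = \<omega>^2 + 4 * \<zeta>^2" by simp
    thus ?thesis unfolding t_def by (simp add: power2_eq_square algebra_simps)
  qed
  have quad: "(\<zeta> * a + \<omega> * b)^2 + \<zeta>^2 * b^2 \<le> t^2 * (a^2 + b^2)" if ab: "a \<ge> 0" "b \<ge> 0" for a b :: real
  proof -
    have br: "t * a^2 - 2 * \<zeta> * a * b + (t - \<omega>) * b^2 \<ge> 0"
    proof (cases "t = 0")
      case True
      hence "\<zeta> = 0" using tt by simp
      moreover have "\<omega> \<le> 2 * t" unfolding t_def by simp
      ultimately show ?thesis using True z0 by simp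
    next
      case False
      hence tp: "t > 0" using t0 by simp
      have "t * (t * a^2 - 2 * \<zeta> * a * b + (t - \<omega>) * b^2) = (t * a - \<zeta> * b)^2 + (t^2 - \<omega> * t - \<zeta>^2) * b^2"
        by (simp add: power2_eq_square algebra_simps)
      hence "t * (t * a^2 - 2 * \<zeta> * a * b + (t - \<omega>) * b^2) = (t * a - \<zeta> * b)^2"
        using tt by simp
      hence "t * (t * a^2 - 2 * \<zeta> * a * b + (t - \<omega>) * b^2) \<ge> 0" by simp
      thus ?thesis using tp by (simp add: zero_le_mult_iff)
    qed
    have "t^2 * (a^2 + b^2) - ((\<zeta> * a + \<omega> * b)^2 + \<zeta>^2 * b^2)
        = \<omega> * (t * a^2 - 2 * \<zeta> * a * b + (t - \<omega>) * b^2) + (t^2 - \<omega> * t - \<zeta>^2) * (a^2 + b^2)"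
      by (simp add: power2_eq_square algebra_simps)
    also have "\<dots> = \<omega> * (t * a^2 - 2 * \<zeta> * a * b + (t - \<omega>) * b^2)" using tt by simp
    also have "\<dots> \<ge> 0" using br z0 by simp
    finally show ?thesis by simp
  qed
  have "opnorm X \<le> t"
  proof (rule opnorm_le_sq[OF t0])
    fix x1 x2 :: complex
    have "cmod (z * x1 + w * x2) \<le> \<zeta> * cmod x1 + \<omega> * cmod x2"
      unfolding \<zeta>_def \<omega>_def by (metis norm_mult norm_triangle_ineq)
    hence "cmod (z * x1 + w * x2)^2 \<le> (\<zeta> * cmod x1 + \<omega> * cmod x2)^2"
      by (simp add: power_mono)
    moreover have "cmod (z * x2)^2 = \<zeta>^2 * cmod x2^2" by (simp add: \<zeta>_def norm_mult power_mult_distrib)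
    ultimately show "cmod (X$1$1 * x1 + X$1$2 * x2)^2 + cmod (X$2$1 * x1 + X$2$2 * x2)^2
               \<le> t^2 * (cmod x1^2 + cmod x2^2)"
      using quad[of "cmod x1" "cmod x2"] X by simp
  qed
  thus ?thesis using t1 by simp
qed

lemma trace2: "trace (A::cmat2) = A$1$1 + A$2$2"
  by (simp add: trace_def sum_2)

lemma E1: fixes a11 a12 a21 a22 x1 x2 :: complex
  shows "cmod x1^2 + cmod x2^2 - (cmod(a11*x1 + a12*x2)^2 + cmod(a21*x1 + a22*x2)^2)
     = (1 - cmod a11^2 - cmod a21^2)*cmod x1^2 + (1 - cmod a12^2 - cmod a22^2)*cmod x2^2
       - 2 * Re ((a11*cnj a12 + a21*cnj a22) * x1 * cnj x2)"
  unfolding cmod_power2 by (simp add: algebra_simps power2_eq_square)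

lemma E2: fixes a11 a12 a21 a22 :: complex
  shows "(1 - cmod a11^2 - cmod a21^2)*(1 - cmod a12^2 - cmod a22^2) - cmod (a11*cnj a12 + a21*cnj a22)^2
     = 1 - (cmod a11^2 + cmod a12^2 + cmod a21^2 + cmod a22^2) + cmod (a11*a22 - a12*a21)^2"
  unfolding cmod_power2 by (simp add: algebra_simps power2_eq_square)

lemma quad_nonneg:
  fixes h1 h2 g x y :: real
  assumes "0 \<le> h1" "0 \<le> h2" "g^2 \<le> h1*h2" "0 \<le> x" "0 \<le> y"
  shows "2*g*x*y \<le> h1*x^2 + h2*y^2"
proof -
  have "2*g*x*y \<le> 2*\<bar>g\<bar>*x*y" using assms by (simp add: mult_right_mono)
  also have "\<bar>g\<bar> \<le> sqrt (h1*h2)" using assms(3) by (simp add: real_le_rsqrt)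
  hence "2*\<bar>g\<bar>*x*y \<le> 2* sqrt(h1*h2)*x*y" using assms by (simp add: mult_right_mono)
  also have "2* sqrt(h1*h2)*x*y = 2*(sqrt h1 * x)*(sqrt h2 * y)" by (simp add: real_sqrt_mult)
  also have "\<dots> \<le> (sqrt h1 * x)^2 + (sqrt h2 * y)^2"
  proof -
    have "0 \<le> (sqrt h1 * x - sqrt h2 * y)^2" by simp
    thus ?thesis by (simp add: power2_diff algebra_simps)
  qed
  also have "\<dots> = h1*x^2 + h2*y^2" using assms by (simp add: power_mult_distrib)
  finally show ?thesis .
qed

lemma frob_core:
  fixes a11 a12 a21 a22 x1 x2 :: complex
  assumes d: "cmod (a11*a22 - a12*a21) \<le> 1"
    and F: "cmod a11^2 + cmod a12^2 + cmod a21^2 + cmod a22^2 \<le> 1 + cmod (a11*a22 - a12*a21)^2"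
  shows "cmod(a11*x1 + a12*x2)^2 + cmod(a21*x1 + a22*x2)^2 \<le> cmod x1^2 + cmod x2^2"
proof -
  define h1 where "h1 = 1 - cmod a11^2 - cmod a21^2"
  define h2 where "h2 = 1 - cmod a12^2 - cmod a22^2"
  define g where "g = a11*cnj a12 + a21*cnj a22"
  have e2: "h1*h2 - cmod g^2 \<ge> 0" using E2[of a11 a21 a12 a22] F unfolding h1_def h2_def g_def by linarith
  have "cmod (a11*a22 - a12*a21)^2 \<le> 1" using d by (simp add: power_le_one)
  hence sum: "h1 + h2 \<ge> 0" using F unfolding h1_def h2_def by linarith
  have gg: "0 \<le> cmod g^2" by simp
  have pr: "h1*h2 \<ge> 0" using e2 gg by linarith
  have h1: "h1 \<ge> 0"
  proof (rule ccontr)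
    assume "\<not> h1 \<ge> 0" hence "h1 < 0" "h2 > 0" using sum by auto
    hence "h1*h2 < 0" by (simp add: mult_neg_pos)
    thus False using pr by simp
  qed
  have h2: "h2 \<ge> 0"
  proof (rule ccontr)
    assume "\<not> h2 \<ge> 0" hence "h2 < 0" "h1 > 0" using sum by auto
    hence "h1*h2 < 0" by (simp add: mult_pos_neg)
    thus False using pr by simp
  qed
  have re: "Re (g * x1 * cnj x2) \<le> cmod g * cmod x1 * cmod x2"
    by (metis complex_Re_le_cmod complex_mod_cnj norm_mult)
  have "2 * (cmod g) * cmod x1 * cmod x2 \<le> h1 * cmod x1^2 + h2 * cmod x2^2"
    by (rule quad_nonneg) (use h1 h2 e2 in auto)
  thus ?thesis using E1[of x1 x2 a11 a12 a21 a22] re unfolding h1_def h2_def g_def by linarith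
qed

lemma frob:
  fixes A :: cmat2
  assumes d: "cmod (det A) \<le> 1"
    and F: "cmod (A$1$1)^2 + cmod (A$1$2)^2 + cmod (A$2$1)^2 + cmod (A$2$2)^2 \<le> 1 + cmod (det A)^2"
  shows "opnorm A \<le> 1"
proof (rule opnorm_le_sq)
  show "(0::real) \<le> 1" by simp
  fix x1 x2
  have "det A = A$1$1 * A$2$2 - A$1$2 * A$2$1" by (rule det_2)
  thus "cmod (A$1$1 * x1 + A$1$2 * x2)^2 + cmod (A$2$1 * x1 + A$2$2 * x2)^2
               \<le> 1^2 * (cmod x1^2 + cmod x2^2)"
    using frob_core[of "A$1$1" "A$2$2" "A$1$2" "A$2$1" x1 x2] d F by simp
qed

lemma det_IAX:
  fixes A X :: cmat2
  assumes X: "X$1$1 = z" "X$1$2 = w" "X$2$1 = 0" "X$2$2 = z"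
  shows "det (mat 1 - A ** X) = 1 - trace A * z + det A * z^2 - A$2$1 * w"
proof -
  have m: "(mat 1 - A ** X)$i$j = (if i = j then 1 else 0) - (A$i$1 * X$1$j + A$i$2 * X$2$j)" for i j
    by (simp add: matrix_matrix_mult_def mat_def sum_2)
  have n: "(1::2) \<noteq> 2" by simp
  show ?thesis unfolding det_2 m trace2 using X n by (simp add: algebra_simps power2_eq_square)
qed

lemma ker2:
  fixes M :: cmat2
  assumes "det M = 0"
  shows "\<exists>v. v \<noteq> 0 \<and> M *v v = 0"
proof -
  have d: "M$1$1 * M$2$2 = M$1$2 * M$2$1" using assms by (simp add: det_2)
  show ?thesis
  proof (cases "M$2$2 = 0 \<and> M$2$1 = 0")
    case False
    let ?v = "vector [M$2$2, - M$2$1] :: complex^2"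
    have "?v \<noteq> 0" using False by (auto simp: vec_eq_iff forall_2)
    moreover have "M *v ?v = 0" using d by (simp add: vec_eq_iff forall_2 mv1 mv2 algebra_simps)
    ultimately show ?thesis by blast
  next
    case True
    note T = True
    show ?thesis
    proof (cases "M$1$2 = 0 \<and> M$1$1 = 0")
      case False
      let ?v = "vector [M$1$2, - M$1$1] :: complex^2"
      have "?v \<noteq> 0" using False by (auto simp: vec_eq_iff forall_2)
      moreover have "M *v ?v = 0" using T by (simp add: vec_eq_iff forall_2 mv1 mv2 algebra_simps)
      ultimately show ?thesis by blast
    next
      case True
      let ?v = "vector [1, 0] :: complex^2"
      have "?v \<noteq> 0" by (auto simp: vec_eq_iff forall_2)
      moreover have "M *v ?v = 0" using T True by (simp add: vec_eq_iff forall_2 mv1 mv2)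
      ultimately show ?thesis by blast
    qed
  qed
qed

lemma S_lower:
  fixes A X :: cmat2
  assumes "det (mat 1 - A ** X) = 0"
  shows "1 \<le> opnorm A * opnorm X"
proof -
  obtain v where v: "v \<noteq> 0" "(mat 1 - A ** X) *v v = 0" using ker2 assms by blast
  have "v = A *v (X *v v)" using v(2) by (simp add: matrix_vector_mult_diff_rdistrib matrix_vector_mul_assoc)
  hence "norm v \<le> opnorm A * norm (X *v v)" by (metis opnorm_bound)
  also have "\<dots> \<le> opnorm A * (opnorm X * norm v)"
    by (rule mult_left_mono[OF opnorm_bound opnorm_nonneg])
  finally have "1 * norm v \<le> (opnorm A * opnorm X) * norm v" by (simp add: algebra_simps)
  thus ?thesis using v(1) by (simp add: mult_le_cancel_right)
qed



lemma muE_le_opnorm: "muE A \<le> opnorm A"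
proof -
  define S where "S = {opnorm X | X. X \<in> Espace \<and> det (mat 1 - A ** X) = 0}"
  have m: "muE A = (if S = {} then 0 else inverse (Inf S))" unfolding muE_def S_def Let_def by simp
  show ?thesis
  proof (cases "S = {}")
    case True thus ?thesis using m opnorm_nonneg by simp
  next
    case False
    have low: "1 \<le> opnorm A * y" if "y \<in> S" for y using that S_lower unfolding S_def by blast
    obtain y0 where y0: "y0 \<in> S" using False by blast
    have pos: "opnorm A > 0" using low[OF y0] opnorm_nonneg[of A]
      by (metis less_eq_real_def mult_zero_left not_one_le_zero)
    have "1 / opnorm A \<le> Inf S"
    proof (rule cInf_greatest[OF False])
      fix y assume "y \<in> S"
      thus "1 / opnorm A \<le> y" using low pos by (simp add: divide_le_eq mult.commute)
    qed
    hence "inverse (Inf S) \<le> inverse (1 / opnorm A)"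
      using pos by (intro le_imp_inverse_le) auto
    thus ?thesis using m False by simp
  qed
qed

lemma muE_C5:
  fixes A :: cmat2 and z :: complex
  assumes mu: "muE A \<le> 1" and z: "cmod z < 1"
  shows "cmod (A$2$1) * (1 - cmod z^2) \<le> cmod (1 - trace A * z + det A * z^2)"
proof (rule ccontr)
  define S where "S = {opnorm X | X. X \<in> Espace \<and> det (mat 1 - A ** X) = 0}"
  have m: "muE A = (if S = {} then 0 else inverse (Inf S))" unfolding muE_def S_def Let_def by simp
  define a where "a = A$2$1"
  define q where "q = 1 - trace A * z + det A * z^2"
  assume "\<not> ?thesis"
  hence lt: "cmod q < cmod a * (1 - cmod z^2)" unfolding a_def q_def by simp
  have a0: "a \<noteq> 0" using lt by auto
  define w where "w = q / a"
  have wlt: "cmod w < 1 - cmod z^2" using lt a0 unfolding w_def by (simp add: norm_divide divide_less_eq mult.commute)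
  define X :: cmat2 where "X = vector [vector [z, w], vector [0, z]]"
  have X: "X$1$1 = z" "X$1$2 = w" "X$2$1 = 0" "X$2$2 = z" unfolding X_def by simp_all
  have XE: "X \<in> Espace" unfolding Espace_def using X by simp
  have "det (mat 1 - A ** X) = q - a * w" unfolding det_IAX[OF X] q_def a_def by simp
  also have "\<dots> = 0" using a0 unfolding w_def by simp
  finally have d0: "det (mat 1 - A ** X) = 0" .
  have XS: "opnorm X \<in> S" unfolding S_def using XE d0 by blast
  have Xn: "opnorm X < 1" by (rule X_norm[OF X z wlt])
  have low: "1 \<le> opnorm A * y" if "y \<in> S" for y using that S_lower unfolding S_def by blast
  have pos: "opnorm A > 0" using low[OF XS] opnorm_nonneg[of A]
    by (metis less_eq_real_def mult_zero_left not_one_le_zero)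
  have ne: "S \<noteq> {}" using XS by blast
  have "1 / opnorm A \<le> Inf S"
  proof (rule cInf_greatest[OF ne])
    fix y assume "y \<in> S"
    thus "1 / opnorm A \<le> y" using low pos by (simp add: divide_le_eq mult.commute)
  qed
  hence ipos: "Inf S > 0" using pos by (smt (verit) divide_pos_pos)
  have bdd: "bdd_below S" unfolding S_def bdd_below_def using opnorm_nonneg by blast
  have "Inf S \<le> opnorm X" by (rule cInf_lower[OF XS bdd])
  hence "Inf S < 1" using Xn by simp
  hence "inverse (Inf S) > 1" using ipos by (simp add: one_less_inverse)
  thus False using mu m ne by simp
qed


lemma identg:
  fixes \<beta> c p e :: complex
  assumes bc: "\<beta> * c = 1 - (e - 1)^2" and e: "e \<noteq> 0"
  shows "1 - (\<beta> + c * p) * (c / e) + p * (c / e)^2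
       = (1 - ((\<beta> + c * p) / 2 * c) / e) * (2 * (e - 1) / e)"
proof -
  have l: "1 - (\<beta> + c * p) * (c / e) + p * (c / e)^2 = (e^2 - (\<beta> * c + c^2 * p) * e + p * c^2) / e^2"
    using e by (simp add: field_simps power2_eq_square)
  have r: "(1 - ((\<beta> + c * p) / 2 * c) / e) * (2 * (e - 1) / e) = (2 * e - (\<beta> * c + c^2 * p)) * (e - 1) / e^2"
    using e by (simp add: field_simps power2_eq_square)
  have "e^2 - (\<beta> * c + c^2 * p) * e + p * c^2 = (2 * e - (\<beta> * c + c^2 * p)) * (e - 1)"
    unfolding bc by (simp add: algebra_simps power2_eq_square)
  thus ?thesis using l r by simp
qed

lemma C5_K:
  fixes \<beta> s p a :: complex
  assumes b1: "cmod \<beta> \<le> 1" and p1: "cmod p \<le> 1" and sb: "s = \<beta> + cnj \<beta> * p"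
    and C: "\<And>z. cmod z < 1 \<Longrightarrow> cmod a * (1 - cmod z^2) \<le> cmod (1 - s * z + p * z^2)"
  shows "cmod a \<le> cmod (1 - (s / 2 * cnj \<beta>) / (1 + sqrt (1 - (cmod \<beta>)^2)))"
proof -
  define \<sigma> where "\<sigma> = sqrt (1 - (cmod \<beta>)^2)"
  define c where "c = cnj \<beta>"
  have b2: "cmod \<beta>^2 \<le> 1" by (rule power_le_one[OF norm_ge_zero b1])
  have s0: "\<sigma> \<ge> 0" unfolding \<sigma>_def using b2 by simp
  have ss: "\<sigma>^2 = 1 - cmod \<beta>^2" unfolding \<sigma>_def using b2 by simp
  have bc: "\<beta> * c = complex_of_real (cmod \<beta>^2)" unfolding c_def by (rule complex_norm_square[symmetric])
  show ?thesis
  proof (cases "\<sigma> > 0")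
    case True
    define e where "e = 1 + complex_of_real \<sigma>"
    have "Re e = 1 + \<sigma>" unfolding e_def by simp
    hence e0: "e \<noteq> 0" using s0 by auto
    have "cmod \<beta>^2 = 1 - \<sigma>^2" using ss by simp
    hence "complex_of_real (cmod \<beta>^2) = 1 - (complex_of_real \<sigma>)^2" by (metis of_real_1 of_real_diff of_real_power)
    hence bc2: "\<beta> * c = 1 - (e - 1)^2" unfolding bc e_def by simp
    define z where "z = c / e"
    have eo: "e = complex_of_real (1 + \<sigma>)" unfolding e_def by simp
    have en: "cmod e = 1 + \<sigma>" unfolding eo norm_of_real using s0 by simp
    have nz: "cmod z = cmod \<beta> / (1 + \<sigma>)" unfolding z_def c_def norm_divide en by simp
    have nb: "cmod \<beta> < 1 + \<sigma>"
    proof -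
      have "(1 + \<sigma>)^2 = 1 + 2 * \<sigma> + \<sigma>^2" by (simp add: power2_eq_square algebra_simps)
      moreover have "\<sigma>^2 \<ge> 0" by simp
      ultimately have "cmod \<beta>^2 < (1 + \<sigma>)^2" using ss True by linarith
      thus ?thesis using s0 by (simp add: power_less_imp_less_base)
    qed
    have z1: "cmod z < 1" unfolding nz using nb s0 by simp
    have rr0: "(1 - \<sigma>^2) / (1+\<sigma>)^2 = (1 - \<sigma>) / (1+\<sigma>)"
      using s0 by (simp add: power2_eq_square divide_simps) (simp add: algebra_simps)
    have q: "1 - cmod z^2 = 2 * \<sigma> / (1 + \<sigma>)"
    proof -
      have "1 - cmod z^2 = 1 - (1 - \<sigma>^2) / (1+\<sigma>)^2" unfolding nz ss by (simp add: power_divide)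
      also have "\<dots> = 2 * \<sigma> / (1+\<sigma>)" unfolding rr0 using s0 by (simp add: field_simps)
      finally show ?thesis .
    qed
    have qpos: "1 - cmod z^2 > 0" unfolding q using True by simp
    have id: "1 - s * z + p * z^2 = (1 - (s / 2 * c) / e) * (2 * (e - 1) / e)"
      unfolding z_def sb c_def[symmetric] using identg[OF bc2 e0, of p] by simp
    have ce: "cmod (2 * (e - 1) / e) = 2 * \<sigma> / (1 + \<sigma>)"
    proof -
      have "2 * (e - 1) / e = complex_of_real (2 * \<sigma> / (1 + \<sigma>))" unfolding e_def by simp
      hence "cmod (2 * (e - 1) / e) = \<bar>2 * \<sigma> / (1 + \<sigma>)\<bar>" by (simp only: norm_of_real)
      thus ?thesis using s0 by simp
    qed
    have "cmod a * (1 - cmod z^2) \<le> cmod (1 - (s / 2 * c) / e) * (1 - cmod z^2)"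
      using C[OF z1] unfolding id norm_mult ce q .
    hence "cmod a \<le> cmod (1 - (s / 2 * c) / e)" using qpos by simp
    thus ?thesis unfolding e_def c_def \<sigma>_def by simp
  next
    case False
    hence sz: "\<sigma> = 0" using s0 by simp
    have b1': "cmod \<beta>^2 = 1" using ss sz by simp
    have bc1: "\<beta> * c = 1" using bc unfolding b1' by simp
    have "cmod \<beta> = 1" using b1' norm_ge_zero[of \<beta>] by (simp add: power2_eq_1_iff)
    hence cn: "cmod c = 1" unfolding c_def by simp
    define K where "K = cmod (1 - c^2 * p) / 2"
    have Kt: "cmod (1 - (s / 2 * cnj \<beta>) / (1 + sqrt (1 - (cmod \<beta>)^2))) = K"
    proof -
      have sq0: "sqrt (1 - (cmod \<beta>)^2) = 0" using sz unfolding \<sigma>_def .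
      have "1 - (s / 2 * cnj \<beta>) / (1 + sqrt (1 - (cmod \<beta>)^2)) = 1 - s / 2 * c"
        unfolding sq0 c_def by simp
      also have "s / 2 * c = (\<beta> * c + c^2 * p) / 2" unfolding sb c_def[symmetric] by (simp add: algebra_simps power2_eq_square)
      also have "1 - (\<beta> * c + c^2 * p) / 2 = (1 - c^2 * p) / 2" unfolding bc1 by (simp add: field_simps)
      finally have "1 - (s / 2 * cnj \<beta>) / (1 + sqrt (1 - (cmod \<beta>)^2)) = (1 - c^2 * p) / 2" .
      hence "cmod (1 - (s / 2 * cnj \<beta>) / (1 + sqrt (1 - (cmod \<beta>)^2))) = cmod ((1 - c^2 * p) / 2)" by (simp only:)
      also have "\<dots> = K" unfolding K_def norm_divide by simp
      finally show ?thesis .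
    qed
    have cp: "cmod (c^2 * p) \<le> 1" using cn p1 by (simp add: norm_mult norm_power)
    have bnd: "cmod a * (1 + t) \<le> 2 * K + (1 - t)" if t: "0 \<le> t" "t < 1" for t :: real
    proof -
      define z where "z = complex_of_real t * c"
      have nz: "cmod z = t" unfolding z_def using cn t by (simp add: norm_mult)
      have "1 - s * z + p * z^2 = complex_of_real (1 - t) * (1 - complex_of_real t * c^2 * p)"
        unfolding z_def sb c_def[symmetric] using bc1 by (simp add: algebra_simps power2_eq_square)
      hence "cmod a * (1 - t^2) \<le> (1 - t) * cmod (1 - complex_of_real t * c^2 * p)"
      proof -
        have n1: "cmod (1 - complex_of_real t) = 1 - t"
        proof -
          have "1 - complex_of_real t = complex_of_real (1 - t)" by simp
          hence "cmod (1 - complex_of_real t) = \<bar>1 - t\<bar>" by (simp only: norm_of_real)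
          thus ?thesis using t by simp
        qed
        have h0: "cmod a * (1 - cmod z^2) \<le> cmod (1 - s * z + p * z^2)" using C[of z] nz t by simp
        have "cmod (1 - s * z + p * z^2) = (1 - t) * cmod (1 - complex_of_real t * c^2 * p)"
          unfolding \<open>1 - s * z + p * z^2 = _\<close> norm_mult norm_of_real using t by simp
        thus ?thesis using h0 nz by simp
      qed
      hence "cmod a * (1 + t) * (1 - t) \<le> cmod (1 - complex_of_real t * c^2 * p) * (1 - t)"
        by (simp add: power2_eq_square algebra_simps)
      hence h: "cmod a * (1 + t) \<le> cmod (1 - complex_of_real t * c^2 * p)" using t by simp
      have "1 - complex_of_real t * c^2 * p = (1 - c^2 * p) + complex_of_real (1 - t) * (c^2 * p)"
        by (simp add: algebra_simps)
      hence "cmod (1 - complex_of_real t * c^2 * p) \<le> cmod (1 - c^2 * p) + (1 - t) * cmod (c^2 * p)"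
        using t by (metis norm_triangle_ineq norm_mult norm_of_real abs_of_nonneg diff_ge_0_iff_ge less_imp_le)
      also have "\<dots> \<le> cmod (1 - c^2 * p) + (1 - t)" using cp t by (simp add: mult_left_le)
      finally show ?thesis using h unfolding K_def by simp
    qed
    show ?thesis unfolding Kt
    proof (rule ccontr)
      assume "\<not> cmod a \<le> K"
      hence gt: "cmod a > K" by simp
      define \<delta> where "\<delta> = (cmod a - K) / (1 + cmod a)"
      have K0: "K \<ge> 0" unfolding K_def by simp
      have ap: "1 + cmod a > 0" by (smt (verit) norm_ge_zero)
      have d0: "\<delta> > 0" unfolding \<delta>_def using gt ap by (intro divide_pos_pos) auto
      have d1: "\<delta> < 1" unfolding \<delta>_def using K0 ap by (simp add: divide_less_eq)
      have "cmod a * (1 + (1 - \<delta>)) \<le> 2 * K + (1 - (1 - \<delta>))" using bnd[of "1 - \<delta>"] d0 d1 by simp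
      hence "2 * (cmod a - K) \<le> \<delta> * (1 + cmod a)" by (simp add: algebra_simps)
      also have "\<delta> * (1 + cmod a) = cmod a - K" unfolding \<delta>_def using ap by simp
      finally show False using gt by simp
    qed
  qed
qed

lemma alg_F1:
  fixes l1 l2 c1 c2 :: complex
  shows "((c1+c2) - (l1+l2) * c1 * c2) * ((l1+l2) - (c1+c2) * l1 * l2)
     = (1 - l1 * l2 * c1 * c2)^2 - ((1 - l1 * c1) * (1 - l2 * c2)) * ((1 - c2 * l1) * (1 - l2 * c1))"
  by (simp add: algebra_simps power2_eq_square)
lemma alg_F2:
  fixes l1 l2 c1 c2 :: complex
  defines "D \<equiv> 1 - l1 * l2 * c1 * c2" and "R \<equiv> (1 - l1 * c1) * (1 - l2 * c2)"
    and "M \<equiv> (1 - c2 * l1) * (1 - l2 * c1)" and "P \<equiv> l1 * l2 * c1 * c2"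
  shows "((c1+c2) - (l1+l2) * c1 * c2)^2 * (l1 * l2) + ((l1+l2) - (c1+c2) * l1 * l2)^2 * (c1 * c2)
     = D^2 + R * M + P * (D^2 + R * M) - D^2 * (R + M)"
  unfolding D_def R_def M_def P_def by (simp add: algebra_simps power2_eq_square)
lemma alg_core:
  fixes D P R M r m A B U :: complex
  assumes r: "r^2 = R" and m: "m^2 = M" and D: "D = 1 - P"
    and U: "U = D^2 - R * M" and AB: "A + B = D^2 + R * M + P * (D^2 + R * M) - D^2 * (R + M)"
    and ABp: "A * B = U^2 * P"
  shows "((D + r * m)^2 - A) * ((D + r * m)^2 - B) = (D * (D + r * m) * (r + m))^2"
proof -
  have "((D + r * m)^2 - A) * ((D + r * m)^2 - B) = (D + r * m)^4 - (D + r * m)^2 * (A + B) + A * B"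
    by (simp add: algebra_simps power2_eq_square power4_eq_xxxx)
  also have "\<dots> = (D + r * m)^4 - (D + r * m)^2 * (D^2 + R * M + P * (D^2 + R * M) - D^2 * (R + M)) + (D^2 - R * M)^2 * P"
    unfolding AB ABp U ..
  also have "\<dots> = (D * (D + r * m) * (r + m))^2"
    unfolding r[symmetric] m[symmetric] D by (simp add: algebra_simps power2_eq_square power4_eq_xxxx)
  finally show ?thesis .
qed

lemma step5g:
  fixes Dc x c p :: complex
  assumes "Dc \<noteq> 0"
  shows "(1 + x)^2 - c^2 * p = ((Dc + Dc * x)^2 - (c * Dc)^2 * p) / Dc^2"
proof -
  have "((Dc + Dc * x)^2 - (c * Dc)^2 * p) = Dc^2 * ((1 + x)^2 - c^2 * p)"
    by (simp add: algebra_simps power2_eq_square)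
  thus ?thesis using assms by simp
qed

lemma K_eq_int:
  fixes l1 l2 s p \<beta> :: complex
  assumes l1: "cmod l1 \<le> 1" and l2: "cmod l2 \<le> 1"
    and s: "s = l1 + l2" and p: "p = l1 * l2"
    and sb: "s = \<beta> + cnj \<beta> * p" and p1: "cmod p < 1"
  shows "cmod (1 - (s / 2 * cnj \<beta>) / (1 + sqrt (1 - (cmod \<beta>)^2)))
       = cmod (1 - cnj l2 * l1) / 2 + sqrt (1 - (cmod l1)^2) * sqrt (1 - (cmod l2)^2) / 2"
proof -
  define c1 where "c1 = cnj l1"
  define c2 where "c2 = cnj l2"
  define c where "c = cnj \<beta>"
  define D where "D = 1 - cmod p^2"
  define Rr where "Rr = (1 - cmod l1^2) * (1 - cmod l2^2)"
  define r where "r = sqrt (1 - (cmod l1)^2) * sqrt (1 - (cmod l2)^2)"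
  define m where "m = cmod (1 - cnj l2 * l1)"
  have D0: "D > 0" unfolding D_def using p1 by (simp add: power_less_one_iff abs_square_less_1)
  have a1: "cmod l1^2 \<le> 1" by (rule power_le_one[OF norm_ge_zero l1])
  have a2: "cmod l2^2 \<le> 1" by (rule power_le_one[OF norm_ge_zero l2])
  have r0: "r \<ge> 0" unfolding r_def using a1 a2 by simp
  have m0: "m \<ge> 0" unfolding m_def by simp
  have rR: "r^2 = Rr" unfolding r_def Rr_def using a1 a2 by (simp add: power_mult_distrib)
  have cl1: "l1 * c1 = complex_of_real (cmod l1^2)" unfolding c1_def by (rule complex_norm_square[symmetric])
  have cl2: "l2 * c2 = complex_of_real (cmod l2^2)" unfolding c2_def by (rule complex_norm_square[symmetric])
  have cp: "cnj p = c1 * c2" unfolding p c1_def c2_def by simp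
  have cs: "cnj s = c1 + c2" unfolding s c1_def c2_def by simp
  have hP: "complex_of_real (cmod p^2) = l1 * l2 * c1 * c2"
    unfolding complex_norm_square cp unfolding p by (simp add: algebra_simps)
  have hD: "complex_of_real D = 1 - l1 * l2 * c1 * c2" unfolding D_def using hP by simp
  have hR: "complex_of_real Rr = (1 - l1 * c1) * (1 - l2 * c2)" unfolding Rr_def cl1 cl2 by simp
  have hM: "complex_of_real (m^2) = (1 - c2 * l1) * (1 - l2 * c1)"
    using complex_norm_square[of "1 - cnj l2 * l1"] unfolding m_def c1_def c2_def by simp
  have hr: "(complex_of_real r)^2 = (1 - l1 * c1) * (1 - l2 * c2)" using hR rR by (metis of_real_power)
  have hm: "(complex_of_real m)^2 = (1 - c2 * l1) * (1 - l2 * c1)" using hM by (metis of_real_power)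
  define u where "u = (c1 + c2) - (l1 + l2) * c1 * c2"
  define ub where "ub = (l1 + l2) - (c1 + c2) * l1 * l2"
  have Dc0: "complex_of_real D \<noteq> 0" using D0 by simp
  have cb: "cnj s = c + \<beta> * cnj p" using arg_cong[OF sb, of cnj] unfolding c_def by simp
  have "\<beta> * complex_of_real D = s - cnj s * p"
  proof -
    have "complex_of_real D = 1 - p * cnj p" unfolding D_def using complex_norm_square[of p] by simp
    hence "\<beta> * complex_of_real D = \<beta> * (1 - p * cnj p)" by simp
    hence "\<beta> * complex_of_real D = \<beta> - \<beta> * cnj p * p" by (simp add: algebra_simps)
    also have "\<dots> = s - cnj s * p" unfolding cb using sb unfolding c_def by (simp add: algebra_simps)
    finally show ?thesis .
  qed
  hence bD: "\<beta> * complex_of_real D = ub" unfolding ub_def cs s p c1_def c2_def by (simp add: algebra_simps)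
  have "cnj (\<beta> * complex_of_real D) = cnj ub" using bD by simp
  hence cD: "c * complex_of_real D = u"
    unfolding c_def u_def ub_def c1_def c2_def by (simp add: algebra_simps)
  have F1: "u * ub = (complex_of_real D)^2 - complex_of_real Rr * complex_of_real (m^2)"
    unfolding u_def ub_def hD hR hM by (rule alg_F1)
  have "complex_of_real (cmod ub^2) = ub * cnj ub" by (rule complex_norm_square)
  also have "cnj ub = u" unfolding ub_def u_def c1_def c2_def by simp
  finally have "complex_of_real (cmod ub^2) = complex_of_real (D^2 - Rr * m^2)"
    using F1 by (simp add: algebra_simps)
  hence ub2: "cmod ub^2 = D^2 - Rr * m^2" by (simp only: of_real_eq_iff)
  have "cmod \<beta> * D = cmod ub" using arg_cong[OF bD, of cmod] D0 by (simp add: norm_mult)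
  hence "cmod \<beta>^2 = cmod ub^2 / D^2" using D0 by (simp add: field_simps power2_eq_square)
  hence hb: "1 - cmod \<beta>^2 = (r * m / D)^2" unfolding ub2 using D0 rR by (simp add: field_simps power2_eq_square)
  hence sig: "sqrt (1 - cmod \<beta>^2) = r * m / D" using r0 m0 D0 by simp
  define \<sigma> where "\<sigma> = r * m / D"
  have s0: "\<sigma> \<ge> 0" unfolding \<sigma>_def using r0 m0 D0 by simp
  have bc: "\<beta> * c = 1 - (complex_of_real \<sigma>)^2"
  proof -
    have "\<beta> * c = complex_of_real (cmod \<beta>^2)" unfolding c_def by (rule complex_norm_square[symmetric])
    also have "cmod \<beta>^2 = 1 - \<sigma>^2" using hb unfolding \<sigma>_def by linarith
    finally show ?thesis by simp
  qed
  have e0: "1 + complex_of_real \<sigma> \<noteq> 0"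
  proof -
    have h: "Re (1 + complex_of_real \<sigma>) = 1 + \<sigma>" by simp
    show ?thesis
    proof
      assume "1 + complex_of_real \<sigma> = 0"
      hence "Re (1 + complex_of_real \<sigma>) = 0" by (simp only: zero_complex.sel)
      thus False using h s0 by simp
    qed
  qed
  have step4: "1 - (s / 2 * c) / (1 + complex_of_real \<sigma>) = ((1 + complex_of_real \<sigma>)^2 - c^2 * p) / (2 * (1 + complex_of_real \<sigma>))"
  proof -
    have "s * c = \<beta> * c + c^2 * p" unfolding sb c_def by (simp add: algebra_simps power2_eq_square)
    hence sc: "s * c = 1 - (complex_of_real \<sigma>)^2 + c^2 * p" unfolding bc .
    have g: "1 - (s / 2 * c) / e = (2 * e - s * c) / (2 * e)" if "e \<noteq> 0" for e :: complex
      using that by (simp add: field_simps)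
    have "2 * (1 + complex_of_real \<sigma>) - s * c = (1 + complex_of_real \<sigma>)^2 - c^2 * p"
      unfolding sc by (simp add: algebra_simps power2_eq_square)
    thus ?thesis using g[OF e0] by simp
  qed
  define X where "X = (complex_of_real D + complex_of_real r * complex_of_real m)^2 - u^2 * p"
  have step5: "(1 + complex_of_real \<sigma>)^2 - c^2 * p = X / (complex_of_real D)^2"
  proof -
    have "D * \<sigma> = r * m" unfolding \<sigma>_def using D0 by simp
    hence "complex_of_real (D * \<sigma>) = complex_of_real (r * m)" by simp
    hence "complex_of_real D * complex_of_real \<sigma> = complex_of_real r * complex_of_real m"
      by (simp only: of_real_mult)
    thus ?thesis unfolding X_def cD[symmetric] using step5g[OF Dc0, of "complex_of_real \<sigma>" c p] by simp
  qed
  have cX: "cnj X = (complex_of_real D + complex_of_real r * complex_of_real m)^2 - ub^2 * cnj p"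
  proof -
    have cu: "cnj u = ub" using \<open>cnj ub = u\<close> complex_cnj_cnj by metis
    show ?thesis unfolding X_def by (simp add: cu)
  qed
  have PP: "complex_of_real (cmod p^2) = 1 - complex_of_real D" unfolding D_def by simp
  have XX: "X * cnj X = (complex_of_real D * (complex_of_real D + complex_of_real r * complex_of_real m) * (complex_of_real r + complex_of_real m))^2"
    unfolding cX unfolding X_def
  proof (rule alg_core[where R = "complex_of_real Rr" and M = "complex_of_real (m^2)" and P = "complex_of_real (cmod p^2)" and U = "u * ub"])
    show "(complex_of_real r)^2 = complex_of_real Rr" using hr hR by simp
    show "(complex_of_real m)^2 = complex_of_real (m^2)" by simp
    show "complex_of_real D = 1 - complex_of_real (cmod p^2)" unfolding PP by simp
    show "u * ub = (complex_of_real D)^2 - complex_of_real Rr * complex_of_real (m^2)" by (rule F1)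
    show "u^2 * p + ub^2 * cnj p = (complex_of_real D)^2 + complex_of_real Rr * complex_of_real (m^2)
      + complex_of_real (cmod p^2) * ((complex_of_real D)^2 + complex_of_real Rr * complex_of_real (m^2))
      - (complex_of_real D)^2 * (complex_of_real Rr + complex_of_real (m^2))"
      unfolding hD hR hM hP u_def ub_def cp unfolding p by (rule alg_F2)
    show "u^2 * p * (ub^2 * cnj p) = (u * ub)^2 * complex_of_real (cmod p^2)"
      using complex_norm_square[of p] by (simp add: algebra_simps power2_eq_square)
  qed
  have "complex_of_real (cmod X^2) = complex_of_real ((D * (D + r * m) * (r + m))^2)"
    unfolding complex_norm_square XX by simp
  hence "cmod X^2 = (D * (D + r * m) * (r + m))^2" by (simp only: of_real_eq_iff)
  hence nX: "cmod X = D * (D + r * m) * (r + m)" using D0 r0 m0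
    by (metis power2_eq_iff_nonneg norm_ge_zero zero_le_mult_iff add_nonneg_nonneg less_imp_le)
  have "1 - (s / 2 * cnj \<beta>) / (1 + sqrt (1 - (cmod \<beta>)^2)) = 1 - (s / 2 * c) / (1 + complex_of_real \<sigma>)"
    unfolding sig c_def \<sigma>_def by simp
  also have "\<dots> = X / (complex_of_real D)^2 / (2 * (1 + complex_of_real \<sigma>))" unfolding step4 step5 ..
  finally have "cmod (1 - (s / 2 * cnj \<beta>) / (1 + sqrt (1 - (cmod \<beta>)^2))) = cmod X / D^2 / (2 * (1 + \<sigma>))"
  proof -
    assume h: "1 - (s / 2 * cnj \<beta>) / (1 + sqrt (1 - (cmod \<beta>)^2)) = X / (complex_of_real D)^2 / (2 * (1 + complex_of_real \<sigma>))"
    have "2 * (1 + complex_of_real \<sigma>) = complex_of_real (2 * (1 + \<sigma>))" by simp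
    hence n2: "cmod (2 * (1 + complex_of_real \<sigma>)) = 2 * (1 + \<sigma>)" using s0 by (simp only: norm_of_real) simp
    show ?thesis unfolding h norm_divide n2 norm_power using D0 by simp
  qed
  also have "\<dots> = (r + m) / 2"
  proof -
    have pos: "D + r * m > 0" using D0 r0 m0 by (simp add: add_pos_nonneg)
    have "2 * (1 + r * m / D) = 2 * (D + r * m) / D" using D0 by (simp add: field_simps)
    hence "D * (D + r * m) * (r + m) / D^2 / (2 * (1 + r * m / D))
       = D * (D + r * m) * (r + m) / D^2 * D / (2 * (D + r * m))" by simp
    also have "\<dots> = (r + m) / 2"
    proof -
      have g: "D * E * (r + m) / D^2 * D / (2 * E) = (r + m) / 2" if "E > 0" for E
        using D0 that by (simp add: power2_eq_square)
      show ?thesis by (rule g[OF pos])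
    qed
    finally show ?thesis unfolding nX \<sigma>_def .
  qed
  finally show ?thesis unfolding r_def m_def by simp
qed

lemma K_eq_bd:
  fixes l1 l2 s p \<beta> :: complex
  assumes l1: "cmod l1 \<le> 1" and l2: "cmod l2 \<le> 1"
    and s: "s = l1 + l2" and p: "p = l1 * l2"
    and p1: "cmod p = 1" and b: "\<beta> = s / 2"
  shows "cmod (1 - (s / 2 * cnj \<beta>) / (1 + sqrt (1 - (cmod \<beta>)^2)))
       = cmod (1 - cnj l2 * l1) / 2 + sqrt (1 - (cmod l1)^2) * sqrt (1 - (cmod l2)^2) / 2"
proof -
  have pm: "cmod l1 * cmod l2 = 1" using p1 unfolding p norm_mult .
  have n1: "cmod l1 = 1"
  proof (rule ccontr)
    assume "cmod l1 \<noteq> 1" hence "cmod l1 < 1" using l1 by simp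
    moreover have "cmod l1 * cmod l2 \<le> cmod l1 * 1" by (rule mult_left_mono[OF l2 norm_ge_zero])
    ultimately have "cmod l1 * cmod l2 < 1" by simp
    thus False using pm by simp
  qed
  have n2: "cmod l2 = 1" using pm n1 by simp
  define m where "m = cmod (1 - cnj l2 * l1)"
  have m0: "m \<ge> 0" unfolding m_def by simp
  have u1: "l1 * cnj l1 = 1" using complex_norm_square[of l1] n1 by simp
  have u2: "l2 * cnj l2 = 1" using complex_norm_square[of l2] n2 by simp
  have "(l1 * cnj l1) * (l2 * cnj l2) = 1" using u1 u2 by simp
  hence u12: "l1 * (l2 * (cnj l1 * cnj l2)) = 1" by (simp add: ac_simps)
  have "complex_of_real (m^2) = (1 - cnj l2 * l1) * cnj (1 - cnj l2 * l1)"
    unfolding m_def by (rule complex_norm_square)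
  also have "\<dots> = 2 - cnj l2 * l1 - l2 * cnj l1" using u1 u2 u12 by (simp add: algebra_simps)
  finally have hm: "complex_of_real (m^2) = 2 - cnj l2 * l1 - l2 * cnj l1" .
  have "complex_of_real (cmod s^2) = s * cnj s" by (rule complex_norm_square)
  also have "\<dots> = 2 + cnj l2 * l1 + l2 * cnj l1" unfolding s using u1 u2 u12 by (simp add: algebra_simps)
  finally have "complex_of_real (cmod s^2) = complex_of_real (4 - m^2)" using hm by simp
  hence hs: "cmod s^2 = 4 - m^2" by (simp only: of_real_eq_iff)
  have bb: "cmod \<beta>^2 = 1 - (m/2)^2" unfolding b norm_divide using hs by (simp add: power_divide)
  have sig: "sqrt (1 - cmod \<beta>^2) = m / 2" unfolding bb using m0 by simp
  have sb: "s / 2 * cnj \<beta> = complex_of_real (cmod \<beta>^2)" unfolding b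
    using complex_norm_square[of "s/2"] by simp
  have "1 - (s / 2 * cnj \<beta>) / (1 + sqrt (1 - (cmod \<beta>)^2)) = complex_of_real (1 - (1 - (m/2)^2) / (1 + m/2))"
  proof -
    have sig': "sqrt (1 - (1 - (m/2)^2)) = m/2" using m0 by simp
    show ?thesis unfolding sb bb sig' by (simp only: of_real_diff of_real_divide of_real_add of_real_1)
  qed
  also have "1 - (1 - (m/2)^2) / (1 + m/2) = m / 2"
  proof -
    have "(1 - (m/2)^2) = (1 - m/2) * (1 + m/2)" by (simp add: algebra_simps power2_eq_square)
    moreover have "1 + m/2 \<noteq> 0" using m0 by simp
    ultimately show ?thesis by simp
  qed
  finally have "cmod (1 - (s / 2 * cnj \<beta>) / (1 + sqrt (1 - (cmod \<beta>)^2))) = \<bar>m / 2\<bar>"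
    by (simp only: norm_of_real)
  thus ?thesis using m0 n1 n2 unfolding m_def by simp
qed


lemma m_ident:
  fixes l1 l2 :: complex
  shows "cmod (1 - cnj l2 * l1)^2 = (1 - cmod l1^2) * (1 - cmod l2^2) + cmod (l1 - l2)^2"
proof -
  have "complex_of_real (cmod (1 - cnj l2 * l1)^2) = (1 - cnj l2 * l1) * cnj (1 - cnj l2 * l1)"
    by (rule complex_norm_square)
  also have "\<dots> = (1 - (l1 * cnj l1)) * (1 - (l2 * cnj l2)) + (l1 - l2) * cnj (l1 - l2)"
    by (simp add: algebra_simps)
  also have "\<dots> = complex_of_real ((1 - cmod l1^2) * (1 - cmod l2^2) + cmod (l1 - l2)^2)"
    unfolding complex_norm_square[symmetric] by simp
  finally show ?thesis by (simp only: of_real_eq_iff)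
qed

lemma parallelogram_c:
  fixes u h :: complex
  shows "cmod (u + h)^2 + cmod (u - h)^2 = 2 * cmod u^2 + 2 * cmod h^2"
proof -
  have "complex_of_real (cmod (u + h)^2 + cmod (u - h)^2) = (u + h) * cnj (u + h) + (u - h) * cnj (u - h)"
    unfolding of_real_add complex_norm_square ..
  also have "\<dots> = 2 * (u * cnj u) + 2 * (h * cnj h)" by (simp add: algebra_simps)
  also have "\<dots> = complex_of_real (2 * cmod u^2 + 2 * cmod h^2)"
    unfolding complex_norm_square[symmetric] by simp
  finally show ?thesis by (simp only: of_real_eq_iff)
qed

lemma construct:
  fixes l1 l2 s p a :: complex
  assumes l1: "cmod l1 \<le> 1" and l2: "cmod l2 \<le> 1"
    and s: "s = l1 + l2" and p: "p = l1 * l2"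
    and aK: "cmod a \<le> cmod (1 - cnj l2 * l1) / 2 + sqrt (1 - (cmod l1)^2) * sqrt (1 - (cmod l2)^2) / 2"
  shows "\<exists>A. opnorm A \<le> 1 \<and> piA A = (a, s, p)"
proof -
  have a1: "cmod l1^2 \<le> 1" by (rule power_le_one[OF norm_ge_zero l1])
  have a2: "cmod l2^2 \<le> 1" by (rule power_le_one[OF norm_ge_zero l2])
  define r where "r = sqrt (1 - (cmod l1)^2) * sqrt (1 - (cmod l2)^2)"
  have r0: "r \<ge> 0" unfolding r_def using a1 a2 by simp
  have rr: "r^2 = (1 - cmod l1^2) * (1 - cmod l2^2)" unfolding r_def using a1 a2 by (simp add: power_mult_distrib)
  have pd: "cmod p \<le> 1" unfolding p norm_mult using l1 l2 by (simp add: mult_le_one)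
  have one_p: "1 + cmod p^2 = cmod l1^2 + cmod l2^2 + r^2"
    unfolding rr p norm_mult by (simp add: algebra_simps power2_eq_square)
  show ?thesis
  proof (cases "a = 0")
    case True
    define A :: cmat2 where "A = vector [vector [l1, 0], vector [0, l2]]"
    have "opnorm A \<le> 1"
    proof (rule frob)
      show "cmod (det A) \<le> 1" unfolding A_def det_2 using pd p by simp
      have "cmod (A$1$1)^2 + cmod (A$1$2)^2 + cmod (A$2$1)^2 + cmod (A$2$2)^2 = cmod l1^2 + cmod l2^2"
        unfolding A_def by simp
      also have "\<dots> \<le> 1 + cmod p^2" unfolding one_p by simp
      also have "cmod p = cmod (det A)" unfolding A_def det_2 p by simp
      finally show "cmod (A$1$1)^2 + cmod (A$1$2)^2 + cmod (A$2$1)^2 + cmod (A$2$2)^2 \<le> 1 + cmod (det A)^2" .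
    qed
    moreover have "piA A = (a, s, p)" unfolding piA_def A_def trace2 det_2 s p True by simp
    ultimately show ?thesis by blast
  next
    case False
    define \<alpha> where "\<alpha> = cmod a"
    have al0: "\<alpha> > 0" unfolding \<alpha>_def using False by simp
    define \<delta> where "\<delta> = l1 - l2"
    define D2 where "D2 = cmod \<delta>^2 / 4"
    have D20: "D2 \<ge> 0" unfolding D2_def by simp
    define m where "m = cmod (1 - cnj l2 * l1)"
    have m0: "m \<ge> 0" unfolding m_def by simp
    have mm: "m^2 = r^2 + 4 * D2" unfolding m_def D2_def \<delta>_def rr using m_ident[of l2 l1] by simp
    have aK': "2 * \<alpha> - r \<le> m" using aK unfolding \<alpha>_def m_def r_def by simp
    define \<xi> where "\<xi> = max 0 (\<alpha>^2 - r * \<alpha>)"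
    have xi0: "\<xi> \<ge> 0" unfolding \<xi>_def by simp
    have xiD: "\<xi> \<le> D2"
    proof (cases "\<alpha>^2 - r * \<alpha> \<le> 0")
      case True thus ?thesis unfolding \<xi>_def D2_def by simp
    next
      case False
      hence "2 * \<alpha> - r > 0" using al0 by (simp add: power2_eq_square algebra_simps)
      hence "(2 * \<alpha> - r)^2 \<le> m^2" using aK' by (simp add: power_mono)
      hence "\<alpha>^2 - r * \<alpha> \<le> D2" unfolding mm by (simp add: power2_eq_square algebra_simps)
      thus ?thesis unfolding \<xi>_def using D20 by simp
    qed
    have key: "\<alpha>^2 - 2 * \<xi> + \<xi>^2 / \<alpha>^2 \<le> r^2"
    proof (cases "\<alpha>^2 - r * \<alpha> \<le> 0")
      case True
      hence "\<xi> = 0" unfolding \<xi>_def by simp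
      moreover have "\<alpha> \<le> r" using True al0 by (simp add: power2_eq_square)
      ultimately show ?thesis using al0 by (simp add: power_mono)
    next
      case False
      hence x: "\<xi> = \<alpha>^2 - r * \<alpha>" unfolding \<xi>_def by simp
      have "\<xi>^2 / \<alpha>^2 = (\<alpha> - r)^2" unfolding x using al0 by (simp add: power2_eq_square field_simps)
      thus ?thesis unfolding x by (simp add: power2_eq_square algebra_simps)
    qed
    define \<theta> where "\<theta> = sqrt (1 - \<xi> / D2)"
    define h where "h = complex_of_real \<theta> * \<delta> / 2"
    have h2: "cmod h^2 = D2 - \<xi>"
    proof (cases "D2 = 0")
      case True
      hence "\<delta> = 0" unfolding D2_def by simp
      thus ?thesis unfolding h_def using True xi0 xiD by simp
    next
      case False
      hence Dp: "D2 > 0" unfolding D2_def by simp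
      have "1 - \<xi> / D2 \<ge> 0" using xiD Dp by simp
      hence "\<theta>^2 = 1 - \<xi> / D2" unfolding \<theta>_def by simp
      moreover have "cmod h^2 = \<theta>^2 * D2" unfolding h_def D2_def norm_mult norm_divide
        by (simp add: power_mult_distrib power_divide)
      ultimately show ?thesis using Dp by (simp add: field_simps)
    qed
    have hd: "cmod (h^2 - \<delta>^2 / 4) = \<xi>"
    proof (cases "D2 = 0")
      case True
      hence "\<delta> = 0" unfolding D2_def by simp
      thus ?thesis unfolding h_def using True xi0 xiD by simp
    next
      case False
      hence Dp: "D2 > 0" unfolding D2_def by simp
      have t0: "1 - \<xi> / D2 \<ge> 0" using xiD Dp by simp
      define q where "q = complex_of_real (\<xi> / D2)"
      have T: "(complex_of_real \<theta>)^2 = 1 - q" unfolding \<theta>_def q_def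
        using t0 by (metis of_real_1 of_real_diff of_real_power real_sqrt_pow2)
      have "h^2 = (complex_of_real \<theta>)^2 * (\<delta>^2 / 4)" unfolding h_def
        by (simp add: power_mult_distrib power_divide)
      hence "h^2 - \<delta>^2 / 4 = - q * (\<delta>^2 / 4)" unfolding T by (simp add: algebra_simps)
      hence "h^2 - \<delta>^2 / 4 = - complex_of_real (\<xi> / D2) * (\<delta>^2 / 4)" unfolding q_def .
      hence "cmod (h^2 - \<delta>^2 / 4) = \<xi> / D2 * (cmod \<delta>^2 / 4)"
        using xi0 Dp by (simp add: norm_mult norm_divide norm_power)
      thus ?thesis unfolding D2_def using Dp unfolding D2_def by simp
    qed
    define x where "x = s / 2 + h"
    define y where "y = s / 2 - h"
    define b where "b = - ((x - l1) * (x - l2)) / a"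
    have xl: "(x - l1) * (x - l2) = h^2 - \<delta>^2 / 4" unfolding x_def s \<delta>_def
      by (simp add: field_simps power2_eq_square)
    define A :: cmat2 where "A = vector [vector [x, b], vector [a, y]]"
    have dA: "det A = p"
    proof -
      have "det A = x * y - b * a" unfolding A_def det_2 by simp
      also have "\<dots> = x * y + (x - l1) * (x - l2)" unfolding b_def using False by simp
      also have "\<dots> = p" unfolding x_def y_def p s by (simp add: field_simps)
      finally show ?thesis .
    qed
    have "opnorm A \<le> 1"
    proof (rule frob)
      show "cmod (det A) \<le> 1" unfolding dA by (rule pd)
      have xy: "cmod x^2 + cmod y^2 = cmod l1^2 + cmod l2^2 - 2 * \<xi>"
      proof -
        have "cmod x^2 + cmod y^2 = 2 * cmod (s/2)^2 + 2 * cmod h^2" unfolding x_def y_def by (rule parallelogram_c)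
        also have "2 * cmod (s/2)^2 = (cmod l1^2 + cmod l2^2) - 2 * D2"
        proof -
          have "cmod (l1 + l2)^2 + cmod (l1 - l2)^2 = 2 * cmod l1^2 + 2 * cmod l2^2" by (rule parallelogram_c)
          thus ?thesis unfolding s D2_def \<delta>_def norm_divide by (simp add: power_divide)
        qed
        finally show ?thesis unfolding h2 by simp
      qed
      have bb: "cmod b^2 = \<xi>^2 / \<alpha>^2" unfolding b_def xl norm_divide norm_minus_cancel hd \<alpha>_def
        by (simp add: power_divide)
      have "cmod (A$1$1)^2 + cmod (A$1$2)^2 + cmod (A$2$1)^2 + cmod (A$2$2)^2
          = (cmod x^2 + cmod y^2) + cmod b^2 + \<alpha>^2" unfolding A_def \<alpha>_def by simp
      also have "\<dots> \<le> cmod l1^2 + cmod l2^2 + r^2" unfolding xy bb using key by simp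
      also have "\<dots> = 1 + cmod (det A)^2" unfolding dA one_p ..
      finally show "cmod (A$1$1)^2 + cmod (A$1$2)^2 + cmod (A$2$1)^2 + cmod (A$2$2)^2 \<le> 1 + cmod (det A)^2" .
    qed
    moreover have "piA A = (a, s, p)" unfolding piA_def trace2 dA unfolding A_def x_def y_def by simp
    ultimately show ?thesis by blast
  qed
qed



lemma opnorm_bound_sq:
  fixes A :: cmat2
  shows "cmod (A$1$1 * x1 + A$1$2 * x2)^2 + cmod (A$2$1 * x1 + A$2$2 * x2)^2
         \<le> (opnorm A)^2 * (cmod x1^2 + cmod x2^2)"
proof -
  define v :: "complex^2" where "v = vector [x1, x2]"
  have "norm (A *v v) \<le> opnorm A * norm v" by (rule opnorm_bound)
  hence "norm (A *v v)^2 \<le> (opnorm A * norm v)^2" by (rule power_mono[OF _ norm_ge_zero])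
  thus ?thesis unfolding power_mult_distrib norm2_vec mv1 mv2 v_def by simp
qed

lemma opnorm_closure:
  fixes A :: cmat2
  assumes "opnorm A \<le> 1"
  shows "piA A \<in> closure Pent"
proof -
  define At :: "real \<Rightarrow> cmat2" where
    "At t = vector [vector [of_real t * A$1$1, of_real t * A$1$2], vector [of_real t * A$2$1, of_real t * A$2$2]]" for t
  have nAt: "opnorm (At t) \<le> \<bar>t\<bar> * opnorm A" for t
  proof (rule opnorm_le_sq)
    show "0 \<le> \<bar>t\<bar> * opnorm A" using opnorm_nonneg[of A] by simp
    fix x1 x2 :: complex
    have e1: "At t $1$1 * x1 + At t $1$2 * x2 = of_real t * (A$1$1 * x1 + A$1$2 * x2)"
      unfolding At_def by (simp add: algebra_simps)
    have e2: "At t $2$1 * x1 + At t $2$2 * x2 = of_real t * (A$2$1 * x1 + A$2$2 * x2)"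
      unfolding At_def by (simp add: algebra_simps)
    have "cmod (At t $1$1 * x1 + At t $1$2 * x2)^2 + cmod (At t $2$1 * x1 + At t $2$2 * x2)^2
        = t^2 * (cmod (A$1$1 * x1 + A$1$2 * x2)^2 + cmod (A$2$1 * x1 + A$2$2 * x2)^2)"
      unfolding e1 e2 norm_mult norm_of_real by (simp add: power_mult_distrib algebra_simps)
    also have "\<dots> \<le> t^2 * ((opnorm A)^2 * (cmod x1^2 + cmod x2^2))"
      by (rule mult_left_mono[OF opnorm_bound_sq]) simp
    also have "\<dots> = (\<bar>t\<bar> * opnorm A)^2 * (cmod x1^2 + cmod x2^2)" by (simp add: power_mult_distrib)
    finally show "cmod (At t $1$1 * x1 + At t $1$2 * x2)^2 + cmod (At t $2$1 * x1 + At t $2$2 * x2)^2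
        \<le> (\<bar>t\<bar> * opnorm A)^2 * (cmod x1^2 + cmod x2^2)" .
  qed
  define f where "f t = (of_real t * A$2$1, of_real t * (A$1$1 + A$2$2), (of_real t)^2 * det A)" for t :: real
  have fA: "f t = piA (At t)" for t
    unfolding f_def piA_def At_def trace2 det_2 by (simp add: algebra_simps power2_eq_square)
  have ev: "eventually (\<lambda>t. f t \<in> closure Pent) (at_left (1::real))"
  proof -
    have "eventually (\<lambda>t. t \<in> {0<..<(1::real)}) (at_left (1::real))"
      by (rule eventually_at_left_real) simp
    thus ?thesis
    proof eventually_elim
      case (elim t)
      hence elim: "t > 0" "t < 1" by auto
      have "opnorm (At t) \<le> t * opnorm A" using nAt[of t] elim by simp
      also have "\<dots> \<le> t" using assms elim by (simp add: mult_left_le)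
      finally have "opnorm (At t) < 1" using elim by simp
      hence "f t \<in> Pent" unfolding fA Pent_def by blast
      thus ?case using closure_subset by blast
    qed
  qed
  have lim: "(f \<longlongrightarrow> f 1) (at_left (1::real))"
    unfolding f_def by (intro tendsto_intros)
  have "f 1 \<in> closure Pent"
    by (rule Lim_in_closed_set[OF closed_closure ev _ lim]) simp
  moreover have "f 1 = piA A" unfolding f_def piA_def trace2 by simp
  ultimately show ?thesis by simp
qed

lemma Pent_sub_Pmu: "Pent \<subseteq> Pmu"
  unfolding Pent_def Pmu_def using muE_le_opnorm by (auto intro: le_less_trans)

definition C5set :: "(complex \<times> complex \<times> complex) set" where
  "C5set = (\<Inter>z\<in>{z. cmod z < 1}. {x. cmod (fst x) * (1 - cmod z^2) \<le> cmod (1 - fst (snd x) * z + snd (snd x) * z^2)})"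

lemma closed_C5set: "closed C5set"
  unfolding C5set_def by (intro closed_INT ballI closed_Collect_le continuous_intros)

lemma Pmu_C5set: "Pmu \<subseteq> C5set"
proof
  fix x assume "x \<in> Pmu"
  then obtain A where A: "muE A < 1" "x = piA A" unfolding Pmu_def by blast
  show "x \<in> C5set" unfolding C5set_def A(2) piA_def
    using muE_C5[of A] A(1) by simp
qed

lemma closure_Pmu_C5: "closure Pmu \<subseteq> C5set"
  using closure_minimal[OF Pmu_C5set closed_C5set] .



lemma den_nz:
  fixes l1 l2 z :: complex
  assumes "cmod l1 \<le> 1" "cmod l2 \<le> 1" "cmod z < 1"
  shows "1 - (l1 + l2) * z + (l1 * l2) * z^2 \<noteq> 0"
proof -
  have f: "1 - l * z \<noteq> 0" if "cmod l \<le> 1" for l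
  proof
    assume "1 - l * z = 0"
    hence "cmod (l * z) = 1" by (metis eq_iff_diff_eq_0 norm_one)
    moreover have "cmod (l * z) < 1" unfolding norm_mult
      using that assms(3) by (metis mult_le_one norm_ge_zero le_less_trans mult_left_le order.strict_implies_order
          mult_strict_left_mono mult.right_neutral linorder_not_le mult_le_cancel_left1 nle_le)
    ultimately show False by simp
  qed
  have "1 - (l1 + l2) * z + (l1 * l2) * z^2 = (1 - l1 * z) * (1 - l2 * z)"
    by (simp add: algebra_simps power2_eq_square)
  thus ?thesis using f assms by simp
qed

lemma Psi_iff:
  fixes z a s p :: complex
  assumes z: "cmod z < 1" and d: "1 - s * z + p * z^2 \<noteq> 0"
  shows "cmod (Psi z a s p) \<le> 1 \<longleftrightarrow> cmod a * (1 - cmod z^2) \<le> cmod (1 - s * z + p * z^2)"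
proof -
  have z2: "cmod z^2 < 1" using z by (simp add: power_less_one_iff abs_square_less_1)
  have "cmod (Psi z a s p) = cmod a * (1 - cmod z^2) / cmod (1 - s * z + p * z^2)"
  proof -
    have nz: "cmod (complex_of_real (1 - cmod z^2)) = 1 - cmod z^2"
      using z2 unfolding norm_of_real by simp
    show ?thesis unfolding Psi_def norm_divide norm_mult nz ..
  qed
  thus ?thesis using d by (simp add: divide_le_eq)
qed




theorem theorem5p3:
  fixes l1 l2 s p \<beta> a :: complex
  assumes "cmod l1 \<le> 1" and "cmod l2 \<le> 1"
    and "s = l1 + l2" and "p = l1 * l2"
    and "cmod \<beta> \<le> 1" and "s = \<beta> + cnj \<beta> * p"
    and "cmod p = 1 \<Longrightarrow> \<beta> = s / 2"
  shows "((a, s, p) \<in> closure Pent \<longleftrightarrow> (a, s, p) \<in> closure Pmu)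
    \<and> ((a, s, p) \<in> closure Pent \<longleftrightarrow>
         cmod a \<le> cmod (1 - (s / 2 * cnj \<beta>) / (1 + sqrt (1 - (cmod \<beta>)^2))))
    \<and> ((a, s, p) \<in> closure Pent \<longleftrightarrow>
         cmod a \<le> cmod (1 - cnj l2 * l1) / 2
                   + sqrt (1 - (cmod l1)^2) * sqrt (1 - (cmod l2)^2) / 2)
    \<and> ((a, s, p) \<in> closure Pent \<longleftrightarrow> (\<forall>z. cmod z < 1 \<longrightarrow> cmod (Psi z a s p) \<le> 1))
    \<and> ((a, s, p) \<in> closure Pent \<longleftrightarrow> (\<exists>A. opnorm A \<le> 1 \<and> piA A = (a, s, p)))
    \<and> ((a, s, p) \<in> closure Pent \<longleftrightarrow> (\<exists>A. muE A \<le> 1 \<and> piA A = (a, s, p)))"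
proof -
  note l1 = assms(1) and l2 = assms(2) and s = assms(3) and p = assms(4) and b1 = assms(5)
    and sb = assms(6) and bp = assms(7)
  have pd: "cmod p \<le> 1" unfolding p norm_mult using l1 l2 by (simp add: mult_le_one)
  define P1 where "P1 = ((a, s, p) \<in> closure Pent)"
  define P2 where "P2 = ((a, s, p) \<in> closure Pmu)"
  define P3 where "P3 = (cmod a \<le> cmod (1 - (s / 2 * cnj \<beta>) / (1 + sqrt (1 - (cmod \<beta>)^2))))"
  define P4 where "P4 = (cmod a \<le> cmod (1 - cnj l2 * l1) / 2
                   + sqrt (1 - (cmod l1)^2) * sqrt (1 - (cmod l2)^2) / 2)"
  define P5 where "P5 = (\<forall>z. cmod z < 1 \<longrightarrow> cmod (Psi z a s p) \<le> 1)"
  define P6 where "P6 = (\<exists>A. opnorm A \<le> 1 \<and> piA A = (a, s, p))"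
  define P7 where "P7 = (\<exists>A. muE A \<le> 1 \<and> piA A = (a, s, p))"
  define C where "C = (\<forall>z. cmod z < 1 \<longrightarrow> cmod a * (1 - cmod z^2) \<le> cmod (1 - s * z + p * z^2))"
  have den: "1 - s * z + p * z^2 \<noteq> 0" if "cmod z < 1" for z
    unfolding s p using den_nz[OF l1 l2 that] .
  have KK: "P3 = P4"
  proof (cases "cmod p = 1")
    case True
    show ?thesis unfolding P3_def P4_def using K_eq_bd[OF l1 l2 s p True bp[OF True]] by simp
  next
    case False
    hence "cmod p < 1" using pd by simp
    thus ?thesis unfolding P3_def P4_def using K_eq_int[OF l1 l2 s p sb] by simp
  qed
  have C5: "P5 = C" unfolding P5_def C_def using Psi_iff den by blast
  have i61: "P6 \<Longrightarrow> P1" unfolding P6_def P1_def using opnorm_closure by metis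
  have i12: "P1 \<Longrightarrow> P2" unfolding P1_def P2_def using closure_mono[OF Pent_sub_Pmu] by blast
  have i2C: "P2 \<Longrightarrow> C" unfolding P2_def C_def using closure_Pmu_C5 unfolding C5set_def by auto
  have iC3: "C \<Longrightarrow> P3" unfolding C_def P3_def using C5_K[OF b1 pd sb] by blast
  have i46: "P4 \<Longrightarrow> P6" unfolding P4_def P6_def using construct[OF l1 l2 s p] by blast
  have i67: "P6 \<Longrightarrow> P7" unfolding P6_def P7_def using muE_le_opnorm by (meson order_trans)
  have i7C: "P7 \<Longrightarrow> C" unfolding P7_def C_def
  proof (elim exE conjE, intro allI impI)
    fix A z assume A: "muE A \<le> 1" "piA A = (a, s, p)" and z: "cmod z < 1"
    have "A$2$1 = a" "trace A = s" "det A = p" using A(2) unfolding piA_def by auto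
    thus "cmod a * (1 - cmod z^2) \<le> cmod (1 - s * z + p * z^2)" using muE_C5[OF A(1) z] by simp
  qed
  have all: "P1 = P2" "P1 = P3" "P1 = P4" "P1 = P5" "P1 = P6" "P1 = P7"
    using i61 i12 i2C iC3 i46 i67 i7C KK C5 by blast+
  thus ?thesis unfolding P1_def P2_def P3_def P4_def P5_def P6_def P7_def by blast
qed

end
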